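(* Let $\Lambda$ be a row-finite $k$-graph with no sources such that for every $w\in\Lambda^0$ and every $1\le i\le k$ the set $\{s(\lambda):\lambda\in w\Lambda^{\mathbb{N}e_i}\}$ is infinite. Then the skew product graph $\Lambda\times_d\mathbb{Z}^k$ is not cofinal.
   Context: A $k$-graph is a countable category $\Lambda$ with a functor $d:\Lambda\to\mathbb{N}^k$ with unique factorisation. $\Lambda^n=d^{-1}(n)$, $\Lambda^0$ = vertices, $uXv=\{\lambda\in X:r(\lambda)=u,s(\lambda)=v\}$; row-finite: $v\Lambda^n$ finite; no sources: $v\Lambda^n\ne\emptyset$ for $n\ne0$. $e_1,\dots,e_k$ are the standard generators of $\mathbb{N}^k$ and $\Lambda^{\mathbb{N}e_i}=\bigcup_{r\ge0}\Lambda^{re_i}$. The skew product $\Lambda\times_d\mathbb{Z}^k$ (with $d$ regarded as a functor into $\mathbb{Z}^k$) is the $k$-graph with vertices $\Lambda^0\times\mathbb{Z}^k$, morphisms $\Lambda\times\mathbb{Z}^k$, $r(\lambda,t)=(r(\lambda),t)$, $s(\lambda,t)=(s(\lambda),t+d(\lambda))$, $(\lambda,t)(\mu,t+d(\lambda))=(\lambda\mu,t)$ and degree $d(\lambda,t)=d(\lambda)$. A $k$-graph $\Gamma$ is cofinal if for all $v,w\in\Gamma^0$ there is $N\in\mathbb{N}^k$ such that $v\Gamma s(\alpha)\neq\emptyset$ for every $\alpha\in w\Gamma^N$. *)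

theory Defs
  imports Main "HOL-Library.Countable_Set" "HOL-Library.Function_Algebras"
begin

text \<open>A k-graph is encoded as a small category whose objects are identified with their
identity morphisms. Elements of N^k are functions nat => nat vanishing outside {..<k};
the standard generator e_i (0 <= i < k) is gen i.\<close>

record 'a kgraph =
  mors :: "'a set"
  rg   :: "'a \<Rightarrow> 'a"
  sc   :: "'a \<Rightarrow> 'a"
  cmp  :: "'a \<Rightarrow> 'a \<Rightarrow> 'a"
  deg  :: "'a \<Rightarrow> (nat \<Rightarrow> nat)"

definition natk :: "nat \<Rightarrow> (nat \<Rightarrow> nat) set" where
  "natk k = {n. \<forall>i\<ge>k. n i = 0}"

definition intk :: "nat \<Rightarrow> (nat \<Rightarrow> int) set" where
  "intk k = {t. \<forall>i\<ge>k. t i = 0}"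

definition gen :: "nat \<Rightarrow> nat \<Rightarrow> nat" where
  "gen i = (\<lambda>j. if j = i then 1 else 0)"

definition is_kgraph :: "nat \<Rightarrow> 'a kgraph \<Rightarrow> bool" where
  "is_kgraph k G \<longleftrightarrow>
     countable (mors G) \<and>
     (\<forall>l\<in>mors G. rg G l \<in> mors G \<and> sc G l \<in> mors G
        \<and> rg G (rg G l) = rg G l \<and> sc G (rg G l) = rg G l
        \<and> rg G (sc G l) = sc G l \<and> sc G (sc G l) = sc G l
        \<and> cmp G (rg G l) l = l \<and> cmp G l (sc G l) = l
        \<and> deg G l \<in> natk k \<and> deg G (rg G l) = 0) \<and>
     (\<forall>l\<in>mors G. \<forall>m\<in>mors G. sc G l = rg G m \<longrightarrow>
        cmp G l m \<in> mors G \<and> rg G (cmp G l m) = rg G l \<and> sc G (cmp G l m) = sc G m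
        \<and> deg G (cmp G l m) = deg G l + deg G m) \<and>
     (\<forall>l\<in>mors G. \<forall>m\<in>mors G. \<forall>n\<in>mors G. sc G l = rg G m \<longrightarrow> sc G m = rg G n \<longrightarrow>
        cmp G (cmp G l m) n = cmp G l (cmp G m n)) \<and>
     (\<forall>l\<in>mors G. \<forall>m n. m + n = deg G l \<longrightarrow>
        (\<exists>!p. fst p \<in> mors G \<and> snd p \<in> mors G \<and> sc G (fst p) = rg G (snd p)
              \<and> deg G (fst p) = m \<and> deg G (snd p) = n \<and> cmp G (fst p) (snd p) = l))"

definition verts :: "'a kgraph \<Rightarrow> 'a set" where
  "verts G = {l\<in>mors G. deg G l = 0}"

definition row_finite :: "'a kgraph \<Rightarrow> bool" where
  "row_finite G \<longleftrightarrow> (\<forall>v\<in>verts G. \<forall>n. finite {l\<in>mors G. rg G l = v \<and> deg G l = n})"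

definition no_sources :: "nat \<Rightarrow> 'a kgraph \<Rightarrow> bool" where
  "no_sources k G \<longleftrightarrow> (\<forall>v\<in>verts G. \<forall>n\<in>natk k. n \<noteq> 0 \<longrightarrow>
      {l\<in>mors G. rg G l = v \<and> deg G l = n} \<noteq> {})"

definition cofinal :: "nat \<Rightarrow> 'a kgraph \<Rightarrow> bool" where
  "cofinal k G \<longleftrightarrow> (\<forall>v\<in>verts G. \<forall>w\<in>verts G. \<exists>N\<in>natk k.
      \<forall>\<alpha>\<in>mors G. rg G \<alpha> = w \<and> deg G \<alpha> = N \<longrightarrow>
        (\<exists>\<mu>\<in>mors G. rg G \<mu> = v \<and> sc G \<mu> = sc G \<alpha>))"

definition skew :: "nat \<Rightarrow> 'a kgraph \<Rightarrow> ('a \<times> (nat \<Rightarrow> int)) kgraph" where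
  "skew k G = \<lparr> mors = mors G \<times> intk k,
     rg = (\<lambda>(l, t). (rg G l, t)),
     sc = (\<lambda>(l, t). (sc G l, (\<lambda>i. t i + int (deg G l i)))),
     cmp = (\<lambda>(l, t) (m, u). (cmp G l m, t)),
     deg = (\<lambda>(l, t). deg G l) \<rparr>"

end

theory Submission
  imports Defs
begin

lemma kg_fact:
  assumes "is_kgraph k G" "l \<in> mors G" "m + n = deg G l"
  shows "\<exists>p q. p \<in> mors G \<and> q \<in> mors G \<and> sc G p = rg G q \<and> deg G p = m \<and> deg G q = n
           \<and> rg G p = rg G l \<and> sc G q = sc G l"
proof -
  from assms have "\<exists>!p. fst p \<in> mors G \<and> snd p \<in> mors G \<and> sc G (fst p) = rg G (snd p)
              \<and> deg G (fst p) = m \<and> deg G (snd p) = n \<and> cmp G (fst p) (snd p) = l"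
    unfolding is_kgraph_def by blast
  then obtain p q where pq: "p \<in> mors G" "q \<in> mors G" "sc G p = rg G q" "deg G p = m" "deg G q = n"
     "cmp G p q = l" by auto
  with assms(1) have "rg G l = rg G p" "sc G l = sc G q" unfolding is_kgraph_def by metis+
  with pq show ?thesis by metis
qed

lemma kg_comp:
  assumes "is_kgraph k G" "p \<in> mors G" "q \<in> mors G" "sc G p = rg G q"
  shows "cmp G p q \<in> mors G \<and> rg G (cmp G p q) = rg G p \<and> sc G (cmp G p q) = sc G q
     \<and> deg G (cmp G p q) = deg G p + deg G q"
  using assms unfolding is_kgraph_def by blast

lemma kg_basic:
  assumes "is_kgraph k G" "l \<in> mors G"
  shows "rg G l \<in> mors G" "sc G l \<in> mors G" "rg G (rg G l) = rg G l" "sc G (rg G l) = rg G l"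
    "rg G (sc G l) = sc G l" "deg G (rg G l) = 0" "deg G l \<in> natk k"
  using assms unfolding is_kgraph_def by blast+

lemma kg_sc_deg:
  assumes "is_kgraph k G" "l \<in> mors G"
  shows "deg G (sc G l) = 0"
  using kg_basic[OF assms] kg_basic[OF assms(1) kg_basic(2)[OF assms]] by metis

theorem theorem7p8:
  fixes k :: nat and G :: "'a kgraph"
  assumes "k \<ge> 1"
    and "is_kgraph k G"
    and "verts G \<noteq> {}"
    and "row_finite G"
    and "no_sources k G"
    and "\<forall>w\<in>verts G. \<forall>i<k.
           infinite {sc G l | l. l \<in> mors G \<and> rg G l = w \<and> (\<exists>r::nat. deg G l = (\<lambda>j. r * gen i j))}"
  shows "\<not> cofinal k (skew k G)"
proof
  assume cof: "cofinal k (skew k G)"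
  note kg = assms(2)
  obtain w0 where w0: "w0 \<in> verts G" using assms(3) by blast
  define w where "w = rg G w0"
  have w0m: "w0 \<in> mors G" using w0 by (simp add: verts_def)
  have w: "w \<in> mors G" "rg G w = w" "sc G w = w" "deg G w = 0"
    using kg_basic[OF kg w0m] by (simp_all add: w_def)
  have wv: "w \<in> verts G" using w by (simp add: verts_def)
  define E where "E = (\<lambda>j. int (gen 0 j))"
  have Ei: "E \<in> intk k" using assms(1) by (simp add: E_def intk_def gen_def)
  have V1: "(w, E) \<in> verts (skew k G)" using w Ei by (simp add: verts_def skew_def)
  have V2: "(w, 0) \<in> verts (skew k G)" using w by (simp add: verts_def skew_def intk_def)
  from cof V1 V2 obtain N where N: "N \<in> natk k" and
    H: "\<forall>\<alpha>\<in>mors (skew k G). rg (skew k G) \<alpha> = (w,0) \<and> deg (skew k G) \<alpha> = N \<longrightarrow>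
        (\<exists>\<mu>\<in>mors (skew k G). rg (skew k G) \<mu> = (w,E) \<and> sc (skew k G) \<mu> = sc (skew k G) \<alpha>)"
    unfolding cofinal_def by blast
  have H': "\<exists>\<mu>\<in>mors G. rg G \<mu> = w \<and> sc G \<mu> = sc G \<alpha> \<and> (\<forall>i. int (gen 0 i) + int (deg G \<mu> i) = int (N i))"
    if "\<alpha> \<in> mors G" "rg G \<alpha> = w" "deg G \<alpha> = N" for \<alpha>
  proof -
    have "(\<alpha>, 0) \<in> mors (skew k G)" using that by (simp add: skew_def intk_def)
    with H that obtain \<mu> where "\<mu> \<in> mors (skew k G)" "rg (skew k G) \<mu> = (w,E)"
      "sc (skew k G) \<mu> = sc (skew k G) (\<alpha>, 0)" by (force simp: skew_def)
    then show ?thesis using that by (cases \<mu>) (auto simp: skew_def E_def fun_eq_iff)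
  qed
  obtain \<alpha> where al: "\<alpha> \<in> mors G" "rg G \<alpha> = w" "deg G \<alpha> = N"
  proof (cases "N = 0")
    case True then show ?thesis using that w by auto
  next
    case False
    then have "{l\<in>mors G. rg G l = w \<and> deg G l = N} \<noteq> {}"
      using assms(5) wv N unfolding no_sources_def by blast
    then show ?thesis using that by blast
  qed
  from H'[OF al] obtain \<mu>0 where "\<forall>i. int (gen 0 i) + int (deg G \<mu>0 i) = int (N i)" by blast
  then have N0: "N 0 \<ge> 1" by (metis gen_def le_add1 of_nat_add of_nat_eq_iff)
  define M where "M = (\<lambda>i. N i - gen 0 i)"
  have NM: "N = (\<lambda>i. M i + gen 0 i)" using N0 by (auto simp: M_def gen_def fun_eq_iff)
  define S where "S P = {sc G l | l. l \<in> mors G \<and> rg G l = w \<and> deg G l = P}" for P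
  have step0: "S (\<lambda>i. M i + gen 0 i) \<subseteq> S M"
  proof
    fix x assume "x \<in> S (\<lambda>i. M i + gen 0 i)"
    then obtain l where l: "l \<in> mors G" "rg G l = w" "deg G l = N" "x = sc G l"
      by (auto simp: S_def NM)
    from H'[OF l(1-3)] obtain \<mu> where mu: "\<mu> \<in> mors G" "rg G \<mu> = w" "sc G \<mu> = sc G l"
      "\<forall>i. int (gen 0 i) + int (deg G \<mu> i) = int (N i)" by blast
    have "deg G \<mu> = M" using mu(4) by (auto simp: M_def fun_eq_iff) (metis add_diff_cancel_left' of_nat_add of_nat_eq_iff)
    then have "x = sc G \<mu> \<and> \<mu> \<in> mors G \<and> rg G \<mu> = w \<and> deg G \<mu> = M" using mu l(4) by simp
    then show "x \<in> S M" unfolding S_def by blast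
  qed
  have stepj: "S (\<lambda>i. M i + Suc j * gen 0 i) \<subseteq> S (\<lambda>i. M i + j * gen 0 i)" for j
  proof (induction j)
    case 0 then show ?case using step0 by simp
  next
    case (Suc j)
    show ?case
    proof
      fix x assume "x \<in> S (\<lambda>i. M i + Suc (Suc j) * gen 0 i)"
      then obtain l where l: "l \<in> mors G" "rg G l = w" "deg G l = (\<lambda>i. M i + Suc (Suc j) * gen 0 i)" "x = sc G l"
        by (auto simp: S_def)
      have "(\<lambda>i. M i + Suc j * gen 0 i) + gen 0 = deg G l" using l(3) by (auto simp: fun_eq_iff)
      from kg_fact[OF kg l(1) this] obtain p q where pq: "p \<in> mors G" "q \<in> mors G" "sc G p = rg G q"
        "deg G p = (\<lambda>i. M i + Suc j * gen 0 i)" "deg G q = gen 0" "rg G p = w" "sc G q = x"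
        using l by metis
      have "sc G p \<in> S (\<lambda>i. M i + Suc j * gen 0 i)" unfolding S_def using pq by blast
      then have "sc G p \<in> S (\<lambda>i. M i + j * gen 0 i)" using Suc.IH by blast
      then obtain p' where p': "p' \<in> mors G" "rg G p' = w" "deg G p' = (\<lambda>i. M i + j * gen 0 i)" "sc G p' = sc G p"
        by (auto simp: S_def)
      from kg_comp[OF kg p'(1) pq(2)] p' pq have c: "cmp G p' q \<in> mors G" "rg G (cmp G p' q) = w"
        "sc G (cmp G p' q) = x" "deg G (cmp G p' q) = (\<lambda>i. M i + Suc j * gen 0 i)"
        by (auto simp: fun_eq_iff)
      then show "x \<in> S (\<lambda>i. M i + Suc j * gen 0 i)" unfolding S_def by blast
    qed
  qed
  have allj: "S (\<lambda>i. M i + j * gen 0 i) \<subseteq> S M" for j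
  proof (induction j)
    case 0 then show ?case by simp
  next
    case (Suc j) then show ?case using stepj[of j] by blast
  qed
  have "S M = sc G ` {l\<in>mors G. rg G l = w \<and> deg G l = M}" by (auto simp: S_def)
  then have finS: "finite (S M)" using assms(4) wv unfolding row_finite_def by simp
  define M' where "M' = (\<lambda>i. if i = 0 then 0 else M i)"
  have "M' + (\<lambda>i. (M 0 + 1) * gen 0 i) = deg G \<alpha>" using al(3) NM
    by (auto simp: M'_def gen_def fun_eq_iff)
  from kg_fact[OF kg al(1) this] obtain \<beta> where be: "\<beta> \<in> mors G" "deg G \<beta> = M'" "rg G \<beta> = w"
    by (metis al(2))
  define u where "u = sc G \<beta>"
  have uv: "u \<in> verts G" using kg_basic[OF kg be(1)] kg_sc_deg[OF kg be(1)] by (simp add: verts_def u_def)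
  have sub: "{sc G l | l. l \<in> mors G \<and> rg G l = u \<and> (\<exists>r::nat. deg G l = (\<lambda>j. r * gen 0 j))}
     \<subseteq> S M \<union> (\<Union>r<M 0. sc G ` {l\<in>mors G. rg G l = u \<and> deg G l = (\<lambda>j. r * gen 0 j)})"
  proof
    fix x assume "x \<in> {sc G l | l. l \<in> mors G \<and> rg G l = u \<and> (\<exists>r::nat. deg G l = (\<lambda>j. r * gen 0 j))}"
    then obtain l r where l: "l \<in> mors G" "rg G l = u" "deg G l = (\<lambda>j. r * gen 0 j)" "x = sc G l" by blast
    show "x \<in> S M \<union> (\<Union>r<M 0. sc G ` {l\<in>mors G. rg G l = u \<and> deg G l = (\<lambda>j. r * gen 0 j)})"
    proof (cases "r < M 0")
      case True then show ?thesis using l by blast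
    next
      case False
      from kg_comp[OF kg be(1) l(1)] l be have c: "cmp G \<beta> l \<in> mors G" "rg G (cmp G \<beta> l) = w"
        "sc G (cmp G \<beta> l) = x" "deg G (cmp G \<beta> l) = (\<lambda>i. M i + (r - M 0) * gen 0 i)"
        using False by (auto simp: u_def fun_eq_iff M'_def gen_def)
      then have "x \<in> S (\<lambda>i. M i + (r - M 0) * gen 0 i)" unfolding S_def by blast
      then show ?thesis using allj by blast
    qed
  qed
  have "finite (S M \<union> (\<Union>r<M 0. sc G ` {l\<in>mors G. rg G l = u \<and> deg G l = (\<lambda>j. r * gen 0 j)}))"
    using finS assms(4) uv unfolding row_finite_def by auto
  with sub have "finite {sc G l | l. l \<in> mors G \<and> rg G l = u \<and> (\<exists>r::nat. deg G l = (\<lambda>j. r * gen 0 j))}"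
    using finite_subset by blast
  with assms(6) uv assms(1) show False by auto
qed

end
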